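(* Every natural-number-valued sequence $F$ in the family $\mathcal{T}_\lambda(\alpha,\beta)$ (restricted to its terms $n_F$, $n\ge1$) belongs to $\mathcal{T}_\lambda$; consequently every such $F$ is a cobweb tiling sequence. Moreover the inclusion $\mathcal{T}_\lambda(\alpha,\beta)\subset\mathcal{T}_\lambda$ is proper: the Fibonacci sequence belongs to $\mathcal{T}_\lambda$ but not to $\mathcal{T}_\lambda(\alpha,\beta)$.
   Context: Throughout, $\mathbb{N}=\{1,2,\dots\}$. The family $\mathcal{T}_\lambda$ consists of sequences $F=(n_F)_{n\ge1}$ of natural numbers for which there exist functions $\lambda_K,\lambda_M:\mathbb{N}\times\mathbb{N}\to\mathbb{N}\cup\{0\}$ such that $(k+m)_F=\lambda_K(k,m)k_F+\lambda_M(k,m)m_F$ for all $k,m\in\mathbb{N}$. The family $\mathcal{T}_\lambda(\alpha,\beta)$ consists of sequences with $n_F=[x^n]\frac{1_F\,x}{(1-\alpha x)(1-\beta x)}$, for some $\alpha,\beta\in\mathbb{N}\cup\{0\}$ and $1_F\in\mathbb{N}$. The Fibonacci sequence is $F_0=0$, $F_1=F_2=1$, $F_{n+1}=F_n+F_{n-1}$. For a sequence $F$ of natural numbers, write $[s_F]=\{1,\dots,s_F\}$, $n_F!=n_F\cdots1_F$ with $0_F!=1$, and $\binom{n}{m}_F=\frac{n_F!}{m_F!(n-m)_F!}$. $F$ is admissible if all $\binom{n}{m}_F\in\mathbb{N}\cup\{0\}$. For $1\le m\le n$ and $k=n-m+1$, the $F$-box is $V_{m,n}=[k_F]\times\cdots\times[n_F]$.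 A sub-box of the form $\sigma V_m$ ($\sigma$ a permutation of $\{1,\dots,m\}$) is $A_1\times\cdots\times A_m$ with $A_s\subseteq[(k+s-1)_F]$ and $|A_s|=(\sigma(s))_F$. A tiling of $V_{m,n}$ is a family of pairwise disjoint such sub-boxes ($\sigma$ may vary) with union $V_{m,n}$. $F$ is a cobweb tiling sequence if it is admissible and every $V_{m,n}$, $1\le m\le n$, has a tiling. *)

theory Defs
  imports "HOL-Computational_Algebra.Formal_Power_Series"
          "HOL-Combinatorics.Permutations"
          "HOL-Number_Theory.Fib"
begin

text \<open>Sequences F = (n_F) are modelled as functions nat => nat; only the values F n
  for n >= 1 are relevant. "Sequence of natural numbers" (N = {1,2,...}) means F n >= 1
  for all n >= 1.\<close>

definition nat_seq :: "(nat \<Rightarrow> nat) \<Rightarrow> bool" where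
  "nat_seq F \<longleftrightarrow> (\<forall>n\<ge>1. F n \<ge> 1)"

definition T_lambda :: "(nat \<Rightarrow> nat) set" where
  "T_lambda = {F. nat_seq F \<and>
     (\<exists>lamK lamM :: nat \<Rightarrow> nat \<Rightarrow> nat. \<forall>k\<ge>1. \<forall>m\<ge>1.
        F (k + m) = lamK k m * F k + lamM k m * F m)}"

definition T_lambda_ab :: "(nat \<Rightarrow> nat) set" where
  "T_lambda_ab = {F. nat_seq F \<and>
     (\<exists>(\<alpha>::nat) (\<beta>::nat) (c::nat). c \<ge> 1 \<and>
        (\<forall>n\<ge>1. of_nat (F n) =
           fps_nth (fps_const (of_nat c :: rat) * fps_X /
             ((1 - fps_const (of_nat \<alpha>) * fps_X) * (1 - fps_const (of_nat \<beta>) * fps_X))) n))}"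

definition F_fact :: "(nat \<Rightarrow> nat) \<Rightarrow> nat \<Rightarrow> nat" where
  "F_fact F n = (\<Prod>k\<in>{1..n}. F k)"

definition admissible :: "(nat \<Rightarrow> nat) \<Rightarrow> bool" where
  "admissible F \<longleftrightarrow> (\<forall>n m. m \<le> n \<longrightarrow> F_fact F m * F_fact F (n - m) dvd F_fact F n)"

definition F_box :: "(nat \<Rightarrow> nat) \<Rightarrow> nat \<Rightarrow> nat \<Rightarrow> (nat \<Rightarrow> nat) set" where
  "F_box F m n = PiE {1..m} (\<lambda>s. {1..F (n - m + s)})"

definition sub_box :: "(nat \<Rightarrow> nat) \<Rightarrow> nat \<Rightarrow> nat \<Rightarrow> (nat \<Rightarrow> nat) set \<Rightarrow> bool" where
  "sub_box F m n B \<longleftrightarrow> (\<exists>\<sigma> A. \<sigma> permutes {1..m} \<and>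
      (\<forall>s\<in>{1..m}. A s \<subseteq> {1..F (n - m + s)} \<and> card (A s) = F (\<sigma> s)) \<and>
      B = PiE {1..m} A)"

definition has_tiling :: "(nat \<Rightarrow> nat) \<Rightarrow> nat \<Rightarrow> nat \<Rightarrow> bool" where
  "has_tiling F m n \<longleftrightarrow> (\<exists>T. (\<forall>B\<in>T. sub_box F m n B) \<and> pairwise disjnt T \<and>
      \<Union>T = F_box F m n)"

definition cobweb_tiling :: "(nat \<Rightarrow> nat) \<Rightarrow> bool" where
  "cobweb_tiling F \<longleftrightarrow> admissible F \<and> (\<forall>m n. 1 \<le> m \<and> m \<le> n \<longrightarrow> has_tiling F m n)"

end

theory Submission
  imports Defs
begin


fun hh :: "nat \<Rightarrow> nat \<Rightarrow> nat \<Rightarrow> nat" where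
  "hh a b 0 = 0"
| "hh a b (Suc n) = a ^ n + b * hh a b n"

lemma hh_add: "hh a b (k + m) = a ^ m * hh a b k + b ^ k * hh a b m"
  by (induction k) (auto simp: algebra_simps power_add)

lemma hh_rec: "hh a b (Suc (Suc n)) + a * b * hh a b n = (a + b) * hh a b (Suc n)"
  by (simp add: algebra_simps)

lemma ring_gen: "(G::'a::comm_ring_1) * ((1 - a * x) * (1 - b * x)) = G - (a + b) * (x * G) + a * b * (x * (x * G))"
  by (simp add: algebra_simps)

lemma fps_coeff:
  "fps_nth (fps_const (of_nat c :: rat) * fps_X /
     ((1 - fps_const (of_nat \<alpha>) * fps_X) * (1 - fps_const (of_nat \<beta>) * fps_X))) n
   = of_nat (c * hh \<alpha> \<beta> n)"
proof -
  define D :: "rat fps" where "D = (1 - fps_const (of_nat \<alpha>) * fps_X) * (1 - fps_const (of_nat \<beta>) * fps_X)"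
  define G :: "rat fps" where "G = Abs_fps (\<lambda>n. of_nat (c * hh \<alpha> \<beta> n))"
  have D0: "D \<noteq> 0"
  proof
    assume "D = 0" then have "fps_nth D 0 = 0" by simp
    then show False by (simp add: D_def)
  qed
  have D00: "fps_nth D 0 = 1" by (simp add: D_def)
  have DG: "G * D = G - fps_const (of_nat (\<alpha> + \<beta>)) * (fps_X * G) + fps_const (of_nat (\<alpha> * \<beta>)) * (fps_X * (fps_X * G))"
  proof -
    have "fps_const (of_nat (\<alpha> + \<beta>)) = fps_const (of_nat \<alpha>) + (fps_const (of_nat \<beta>) :: rat fps)"
      by (simp add: fps_const_add)
    moreover have "fps_const (of_nat (\<alpha> * \<beta>)) = fps_const (of_nat \<alpha>) * (fps_const (of_nat \<beta>) :: rat fps)"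
      by (simp add: fps_const_mult)
    ultimately show ?thesis unfolding D_def by (simp only: ring_gen)
  qed
  have "G * D = fps_const (of_nat c) * fps_X"
  proof (rule fps_ext)
    fix n
    show "fps_nth (G * D) n = fps_nth (fps_const (of_nat c) * fps_X) n"
    proof (cases n)
      case 0 then show ?thesis unfolding DG by (simp add: G_def)
    next
      case (Suc k)
      show ?thesis
      proof (cases k)
        case 0 then show ?thesis using Suc unfolding DG by (simp add: G_def)
      next
        case (Suc j)
        have "of_nat (c * hh \<alpha> \<beta> (Suc (Suc j))) + of_nat (\<alpha> * \<beta>) * (of_nat (c * hh \<alpha> \<beta> j) :: rat)
              = of_nat (\<alpha> + \<beta>) * of_nat (c * hh \<alpha> \<beta> (Suc j))"
        proof -
          have "c * hh \<alpha> \<beta> (Suc (Suc j)) + \<alpha> * \<beta> * (c * hh \<alpha> \<beta> j) = (\<alpha> + \<beta>) * (c * hh \<alpha> \<beta> (Suc j))"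
            using hh_rec[of \<alpha> \<beta> j] by (metis add_mult_distrib2 mult.assoc mult.left_commute)
          then show ?thesis by (metis of_nat_add of_nat_mult)
        qed
        then show ?thesis using Suc \<open>n = Suc k\<close> unfolding DG by (simp add: G_def algebra_simps)
      qed
    qed
  qed
  then have "fps_const (of_nat c) * fps_X / D = G" using D0 by (metis fps_divide_times_eq)
  then show ?thesis by (simp add: D_def G_def)
qed



definition tiles :: "('a set \<Rightarrow> bool) \<Rightarrow> 'a set \<Rightarrow> bool" where
  "tiles good S \<longleftrightarrow> (\<exists>T. (\<forall>B\<in>T. good B) \<and> pairwise disjnt T \<and> \<Union>T = S)"

lemma tiles_mono: "tiles g S \<Longrightarrow> (\<And>B. g B \<Longrightarrow> g' B) \<Longrightarrow> tiles g' S"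
  unfolding tiles_def by blast

lemma tiles_single: "g S \<Longrightarrow> tiles g S"
  unfolding tiles_def by (intro exI[of _ "{S}"]) auto

lemma tiles_UN:
  assumes "\<And>i. i \<in> J \<Longrightarrow> tiles g (Q i)"
    and "\<And>i j. i \<in> J \<Longrightarrow> j \<in> J \<Longrightarrow> i \<noteq> j \<Longrightarrow> disjnt (Q i) (Q j)"
  shows "tiles g (\<Union>i\<in>J. Q i)"
proof -
  from assms(1) have "\<forall>i\<in>J. \<exists>T. (\<forall>B\<in>T. g B) \<and> pairwise disjnt T \<and> \<Union>T = Q i"
    unfolding tiles_def by blast
  then have "\<exists>T. \<forall>i\<in>J. (\<forall>B\<in>T i. g B) \<and> pairwise disjnt (T i) \<and> \<Union>(T i) = Q i"
    by (rule bchoice)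
  then obtain T where T0: "\<forall>i\<in>J. (\<forall>B\<in>T i. g B) \<and> pairwise disjnt (T i) \<and> \<Union>(T i) = Q i"
    by blast
  have Tg: "\<And>i B. i \<in> J \<Longrightarrow> B \<in> T i \<Longrightarrow> g B" using T0 by blast
  have Tp: "\<And>i. i \<in> J \<Longrightarrow> pairwise disjnt (T i)" using T0 by blast
  have TU: "\<And>i. i \<in> J \<Longrightarrow> \<Union>(T i) = Q i" using T0 by blast
  show ?thesis unfolding tiles_def
  proof (intro exI[of _ "\<Union>i\<in>J. T i"] conjI)
    show "\<forall>B\<in>\<Union>i\<in>J. T i. g B" using Tg by blast
    have "\<Union>(\<Union>i\<in>J. T i) = (\<Union>i\<in>J. \<Union>(T i))" by blast
    also have "\<dots> = (\<Union>i\<in>J. Q i)" by (rule SUP_cong) (simp_all add: TU)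
    finally show "\<Union>(\<Union>i\<in>J. T i) = (\<Union>i\<in>J. Q i)" .
    show "pairwise disjnt (\<Union>i\<in>J. T i)"
    proof (rule pairwiseI)
      fix B B' assume B: "B \<in> (\<Union>i\<in>J. T i)" and B': "B' \<in> (\<Union>i\<in>J. T i)" and ne: "B \<noteq> B'"
      from B obtain i where i: "i \<in> J" "B \<in> T i" by blast
      from B' obtain j where j: "j \<in> J" "B' \<in> T j" by blast
      show "disjnt B B'"
      proof (cases "i = j")
        case True then show ?thesis using Tp[OF i(1)] i j ne unfolding pairwise_def by blast
      next
        case False
        have "B \<subseteq> Q i" using TU[OF i(1)] i(2) by blast
        moreover have "B' \<subseteq> Q j" using TU[OF j(1)] j(2) by blast
        ultimately show ?thesis using assms(2)[OF i(1) j(1) False] unfolding disjnt_def by blast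
      qed
    qed
  qed
qed

definition extE :: "'i \<Rightarrow> 'b set \<Rightarrow> ('i \<Rightarrow> 'b) set \<Rightarrow> ('i \<Rightarrow> 'b) set" where
  "extE x Y B = (\<lambda>(y, f). f(x := y)) ` (Y \<times> B)"

lemma tiles_ext:
  assumes "tiles g S" "S \<subseteq> extensional I'" "x \<notin> I'"
    and "\<And>B. g B \<Longrightarrow> B \<subseteq> S \<Longrightarrow> g' (extE x Y B)"
  shows "tiles g' (extE x Y S)"
proof -
  from assms(1) obtain T where T: "\<forall>B\<in>T. g B" "pairwise disjnt T" "\<Union>T = S"
    unfolding tiles_def by blast
  show ?thesis unfolding tiles_def
  proof (intro exI[of _ "extE x Y ` T"] conjI)
    show "\<forall>B\<in>extE x Y ` T. g' B" using T assms(4) by blast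
    show "\<Union>(extE x Y ` T) = extE x Y S" using T(3) unfolding extE_def by blast
    show "pairwise disjnt (extE x Y ` T)"
    proof (rule pairwiseI)
      fix C C' assume "C \<in> extE x Y ` T" "C' \<in> extE x Y ` T" "C \<noteq> C'"
      then obtain B B' where B: "B \<in> T" "B' \<in> T" "C = extE x Y B" "C' = extE x Y B'" "B \<noteq> B'"
        by blast
      have dj: "disjnt B B'" using T(2) B by (auto simp: pairwise_def)
      show "disjnt C C'"
      proof (rule ccontr)
        assume "\<not> disjnt C C'"
        then obtain y f y' f' where yf: "y \<in> Y" "f \<in> B" "y' \<in> Y" "f' \<in> B'" "f(x := y) = f'(x := y')"
          unfolding B extE_def disjnt_def by auto
        have "f \<in> extensional I'" "f' \<in> extensional I'" using yf T(3) B assms(2) by blast+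
        then have "f x = f' x" using assms(3) by (simp add: extensional_def)
        with yf(5) have "f = f'" by (metis fun_upd_triv fun_upd_upd)
        then show False using dj yf by (auto simp: disjnt_def)
      qed
    qed
  qed
qed


lemma extE_PiE: "x \<notin> I' \<Longrightarrow> extE x Y (PiE I' A) = PiE (insert x I') (A(x := Y))"
proof -
  assume x: "x \<notin> I'"
  have "PiE I' (A(x := Y)) = PiE I' A" using x by (intro PiE_cong) auto
  then show ?thesis unfolding extE_def PiE_insert_eq
    by (auto simp: image_def)
qed

lemma bij_upd: "bij_betw f A B \<Longrightarrow> a \<notin> A \<Longrightarrow> b \<notin> B \<Longrightarrow> bij_betw (f(a := b)) (insert a A) (insert b B)"
  unfolding bij_betw_def inj_on_def by (auto simp: image_def)

lemma partition_card:
  assumes "finite X" "card X = a * p + b * q"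
  shows "\<exists>P. (\<forall>Y\<in>P. Y \<subseteq> X \<and> (card Y = p \<or> card Y = q)) \<and> pairwise disjnt P \<and> \<Union>P = X"
  using assms
proof (induction "a + b" arbitrary: a b X)
  case 0
  then have "X = {}" by auto
  then show ?case by (intro exI[of _ "{}"]) auto
next
  case (Suc t)
  have "\<exists>r. r \<le> card X \<and> (r = p \<or> r = q) \<and> (\<exists>a' b'. a' + b' = t \<and> card X - r = a' * p + b' * q)"
  proof (cases a)
    case 0
    then obtain b' where "b = Suc b'" using Suc by (cases b) auto
    then have "q \<le> card X \<and> (q = p \<or> q = q) \<and> (0 + b' = t \<and> card X - q = 0 * p + b' * q)"
      using Suc 0 by auto
    then show ?thesis by blast
  next
    case (Suc a')
    then have "p \<le> card X \<and> (p = p \<or> p = q) \<and> (a' + b = t \<and> card X - p = a' * p + b * q)"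
      using Suc.prems Suc.hyps by auto
    then show ?thesis by blast
  qed
  then obtain r a' b' where r: "r \<le> card X" "r = p \<or> r = q" "a' + b' = t" "card X - r = a' * p + b' * q"
    by blast
  obtain Y where Y: "Y \<subseteq> X" "card Y = r" "finite Y" using obtain_subset_with_card_n[OF r(1)] by metis
  have "card (X - Y) = a' * p + b' * q" using Y r Suc.prems by (simp add: card_Diff_subset)
  moreover have "finite (X - Y)" using Suc.prems by simp
  ultimately obtain P where P: "\<forall>Z\<in>P. Z \<subseteq> X - Y \<and> (card Z = p \<or> card Z = q)" "pairwise disjnt P" "\<Union>P = X - Y"
    using Suc.hyps(1)[of a' b' "X - Y"] r(3) by metis
  show ?case
  proof (intro exI[of _ "insert Y P"] conjI)
    show "\<forall>Z\<in>insert Y P. Z \<subseteq> X \<and> (card Z = p \<or> card Z = q)" using P Y r by auto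
    show "\<Union>(insert Y P) = X" using P Y by auto
    show "pairwise disjnt (insert Y P)"
      using P by (auto simp: pairwise_insert disjnt_def)
  qed
qed


definition goodF :: "(nat \<Rightarrow> nat) \<Rightarrow> 'i set \<Rightarrow> ('i \<Rightarrow> nat set) \<Rightarrow> nat \<Rightarrow> ('i \<Rightarrow> nat) set \<Rightarrow> bool" where
  "goodF F I X m B \<longleftrightarrow> (\<exists>\<sigma> A. bij_betw \<sigma> I {1..m} \<and>
      (\<forall>s\<in>I. A s \<subseteq> X s \<and> card (A s) = F (\<sigma> s)) \<and> B = PiE I A)"

lemma main_tiling:
  fixes F :: "nat \<Rightarrow> nat"
  assumes dec: "\<And>k m. k \<ge> 1 \<Longrightarrow> m \<ge> 1 \<Longrightarrow> F (k + m) = lamK k m * F k + lamM k m * F m"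
  shows "m \<le> n \<Longrightarrow> finite I \<Longrightarrow> card I = m \<Longrightarrow> bij_betw g I {n - m + 1..n} \<Longrightarrow>
    (\<forall>s\<in>I. finite (X s) \<and> card (X s) = F (g s)) \<Longrightarrow> tiles (goodF F I X m) (PiE I X)"
proof (induction n arbitrary: m I g X)
  case 0
  then have "I = {}" "m = 0" by auto
  then show ?case
    by (intro tiles_single) (auto simp: goodF_def bij_betw_def intro!: exI[of _ X])
next
  case (Suc n)
  show ?case
  proof (cases "m = 0 \<or> m = Suc n")
    case True
    show ?thesis
    proof (intro tiles_single)
      show "goodF F I X m (PiE I X)"
      proof (cases "m = 0")
        case True
        then have "I = {}" using Suc.prems by auto
        then show ?thesis using True
          by (auto simp: goodF_def bij_betw_def intro!: exI[of _ X])
      next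
        case False
        then have "m = Suc n" using True by auto
        then show ?thesis using Suc.prems
          by (auto simp: goodF_def intro!: exI[of _ g] exI[of _ X])
      qed
    qed
  next
    case False
    then have m1: "1 \<le> m" "m \<le> n" using Suc.prems by auto
    have bij: "bij_betw g I {Suc n - m + 1..Suc n}" using Suc.prems by simp
    have "Suc n \<in> g ` I" using bij m1 by (auto simp: bij_betw_def)
    then obtain s0 where s0: "s0 \<in> I" "g s0 = Suc n" by auto
    have Fdec: "F (Suc n) = lamK (Suc n - m) m * F (Suc n - m) + lamM (Suc n - m) m * F m"
      using dec[of "Suc n - m" m] m1 by simp
    have finX: "finite (X s0)" "card (X s0) = F (Suc n)" using Suc.prems s0 by auto
    obtain P where P: "\<forall>Y\<in>P. Y \<subseteq> X s0 \<and> (card Y = F (Suc n - m) \<or> card Y = F m)"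
      "pairwise disjnt P" "\<Union>P = X s0"
      using partition_card[OF finX(1), of "lamK (Suc n - m) m" "F (Suc n - m)" "lamM (Suc n - m) m" "F m"]
        finX Fdec by auto
    have eq: "PiE I X = (\<Union>Y\<in>P. PiE I (X(s0 := Y)))"
    proof
      show "PiE I X \<subseteq> (\<Union>Y\<in>P. PiE I (X(s0 := Y)))"
      proof
        fix f assume f: "f \<in> PiE I X"
        then have "f s0 \<in> X s0" using s0 by auto
        then obtain Y where "Y \<in> P" "f s0 \<in> Y" using P(3) by blast
        then show "f \<in> (\<Union>Y\<in>P. PiE I (X(s0 := Y)))" using f by (auto simp: PiE_def Pi_def)
      qed
      show "(\<Union>Y\<in>P. PiE I (X(s0 := Y))) \<subseteq> PiE I X"
        using P(1) by (auto simp: PiE_def Pi_def)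
    qed
    have "tiles (goodF F I X m) (\<Union>Y\<in>P. PiE I (X(s0 := Y)))"
    proof (rule tiles_UN)
      fix Y Y' assume "Y \<in> P" "Y' \<in> P" "Y \<noteq> Y'"
      then have "disjnt Y Y'" using P(2) by (auto simp: pairwise_def)
      then show "disjnt (PiE I (X(s0 := Y))) (PiE I (X(s0 := Y')))"
        using s0 by (auto simp: disjnt_def PiE_def Pi_def)
    next
      fix Y assume Y: "Y \<in> P"
      then have YX: "Y \<subseteq> X s0" using P by auto
      have finY: "finite Y" using YX finX rev_finite_subset by blast
      have bij': "bij_betw g (I - {s0}) {Suc n - m + 1..n}"
      proof -
        have "bij_betw g (I - {s0}) ({Suc n - m + 1..Suc n} - {Suc n})"
          by (rule bij_betw_DiffI[OF bij]) (use s0 m1 in \<open>auto simp: bij_betw_def\<close>)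
        moreover have "{Suc n - m + 1..Suc n} - {Suc n} = {Suc n - m + 1..n}" by auto
        ultimately show ?thesis by simp
      qed
      have Ieq: "I = insert s0 (I - {s0})" using s0 by auto
      from Y P consider "card Y = F (Suc n - m)" | "card Y = F m" by blast
      then show "tiles (goodF F I X m) (PiE I (X(s0 := Y)))"
      proof cases
        case 1
        have b2: "bij_betw (g(s0 := Suc n - m)) (insert s0 (I - {s0})) (insert (Suc n - m) {Suc n - m + 1..n})"
          by (rule bij_upd[OF bij']) auto
        moreover have "insert (Suc n - m) {Suc n - m + 1..n} = {n - m + 1..n}" using m1 by auto
        ultimately have b3: "bij_betw (g(s0 := Suc n - m)) I {n - m + 1..n}" using Ieq[symmetric] by simp
        have cnd: "\<forall>s\<in>I. finite ((X(s0 := Y)) s) \<and> card ((X(s0 := Y)) s) = F ((g(s0 := Suc n - m)) s)"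
          using Suc.prems(5) 1 finY by simp
        have "tiles (goodF F I (X(s0 := Y)) m) (PiE I (X(s0 := Y)))"
          using Suc.IH[OF m1(2) Suc.prems(2) Suc.prems(3) b3 cnd] .
        then show ?thesis
        proof (rule tiles_mono)
          fix B assume "goodF F I (X(s0 := Y)) m B"
          then obtain \<sigma> A where sA: "bij_betw \<sigma> I {1..m}"
            "\<forall>s\<in>I. A s \<subseteq> (X(s0 := Y)) s \<and> card (A s) = F (\<sigma> s)" "B = PiE I A"
            unfolding goodF_def by blast
          have "\<forall>s\<in>I. A s \<subseteq> X s \<and> card (A s) = F (\<sigma> s)"
          proof
            fix s assume "s \<in> I"
            then have h: "A s \<subseteq> (X(s0 := Y)) s \<and> card (A s) = F (\<sigma> s)" using sA(2) by blast
            show "A s \<subseteq> X s \<and> card (A s) = F (\<sigma> s)"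
            proof (cases "s = s0")
              case True then show ?thesis using h YX by auto
            next
              case False then show ?thesis using h by simp
            qed
          qed
          then show "goodF F I X m B" unfolding goodF_def using sA by blast
        qed
      next
        case 2
        have fin': "finite (I - {s0})" "card (I - {s0}) = m - 1" using Suc.prems s0 by auto
        have "n - (m - 1) + 1 = Suc n - m + 1" using m1 by simp
        then have b4: "bij_betw g (I - {s0}) {n - (m - 1) + 1..n}" using bij' by simp
        have ml: "m - 1 \<le> n" using m1 by simp
        have cnd: "\<forall>s\<in>I - {s0}. finite (X s) \<and> card (X s) = F (g s)" using Suc.prems(5) by simp
        have T: "tiles (goodF F (I - {s0}) X (m - 1)) (PiE (I - {s0}) X)"
          using Suc.IH[OF ml fin' b4 cnd] .
        have "tiles (goodF F I X m) (extE s0 Y (PiE (I - {s0}) X))"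
        proof (rule tiles_ext[OF T])
          show "PiE (I - {s0}) X \<subseteq> extensional (I - {s0})" by (auto simp: PiE_def)
          show "s0 \<notin> I - {s0}" by simp
        next
          fix B assume "goodF F (I - {s0}) X (m - 1) B"
          then obtain \<sigma> A where sA: "bij_betw \<sigma> (I - {s0}) {1..m - 1}"
            "\<forall>s\<in>I - {s0}. A s \<subseteq> X s \<and> card (A s) = F (\<sigma> s)" "B = PiE (I - {s0}) A"
            unfolding goodF_def by blast
          have "bij_betw (\<sigma>(s0 := m)) (insert s0 (I - {s0})) (insert m {1..m - 1})"
            by (rule bij_upd[OF sA(1)]) auto
          moreover have "insert m {1..m - 1} = {1..m}" using m1 by auto
          ultimately have bs: "bij_betw (\<sigma>(s0 := m)) I {1..m}" using Ieq[symmetric] by simp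
          have "extE s0 Y B = PiE I (A(s0 := Y))" using sA(3) extE_PiE[of s0 "I - {s0}" Y A] Ieq[symmetric] by simp
          then show "goodF F I X m (extE s0 Y B)" unfolding goodF_def
            using bs sA(2) YX 2
            by (intro exI[of _ "\<sigma>(s0 := m)"] exI[of _ "A(s0 := Y)"]) auto
        qed
        moreover have "extE s0 Y (PiE (I - {s0}) X) = PiE I (X(s0 := Y))"
          using extE_PiE[of s0 "I - {s0}" Y X] Ieq[symmetric] by simp
        ultimately show ?thesis by simp
      qed
    qed
    then show ?thesis using eq by simp
  qed
qed



lemma F_fact_Suc: "F_fact F (Suc n) = F (Suc n) * F_fact F n"
  unfolding F_fact_def by (simp add: prod.cl_ivl_Suc mult.commute)

lemma F_fact_0: "F_fact F 0 = 1"
  unfolding F_fact_def by simp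

lemma adm_T:
  fixes F :: "nat \<Rightarrow> nat"
  assumes dec: "\<And>k m. k \<ge> 1 \<Longrightarrow> m \<ge> 1 \<Longrightarrow> F (k + m) = lamK k m * F k + lamM k m * F m"
  shows "admissible F"
  unfolding admissible_def
proof (rule allI)
  fix n show "\<forall>m. m \<le> n \<longrightarrow> F_fact F m * F_fact F (n - m) dvd F_fact F n"
  proof (induction n)
    case 0 then show ?case by (simp add: F_fact_0)
  next
    case (Suc n)
    show ?case
    proof (intro allI impI)
      fix m assume m: "m \<le> Suc n"
      show "F_fact F m * F_fact F (Suc n - m) dvd F_fact F (Suc n)"
      proof (cases "m = 0 \<or> m = Suc n")
        case True then show ?thesis by (auto simp: F_fact_0)
      next
        case False
        then have m1: "1 \<le> m" "m \<le> n" using m by auto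
        define k where "k = Suc n - m"
        have k1: "k \<ge> 1" "k + m = Suc n" using m1 by (auto simp: k_def)
        have Fd: "F (Suc n) = lamK k m * F k + lamM k m * F m" using dec[OF k1(1) m1(1)] k1(2) by simp
        have ksuc: "k = Suc (n - m)" using m1 by (simp add: k_def)
        have d1: "F_fact F m * F_fact F (n - m) dvd F_fact F n" using Suc.IH m1 by blast
        have d2: "F_fact F (m - 1) * F_fact F (n - (m - 1)) dvd F_fact F n" using Suc.IH[rule_format, of "m - 1"] m1 by linarith
        have e1: "F_fact F m * F_fact F k = F k * (F_fact F m * F_fact F (n - m))"
          using ksuc F_fact_Suc[of F "n - m"] by simp
        have "m = Suc (m - 1)" using m1 by simp
        then have "F_fact F m = F m * F_fact F (m - 1)" using F_fact_Suc[of F "m - 1"] by simp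
        moreover have "n - (m - 1) = k" using m1 by (simp add: k_def)
        ultimately have e2: "F_fact F m * F_fact F k = F m * (F_fact F (m - 1) * F_fact F (n - (m - 1)))"
          by simp
        have "F_fact F m * F_fact F k dvd F k * F_fact F n"
          unfolding e1 using d1 by (rule mult_dvd_mono[OF dvd_refl])
        moreover have "F_fact F m * F_fact F k dvd F m * F_fact F n"
          unfolding e2 using d2 by (rule mult_dvd_mono[OF dvd_refl])
        ultimately have "F_fact F m * F_fact F k dvd lamK k m * (F k * F_fact F n) + lamM k m * (F m * F_fact F n)"
          by (rule dvd_add[OF dvd_mult dvd_mult])
        moreover have "F_fact F (Suc n) = lamK k m * (F k * F_fact F n) + lamM k m * (F m * F_fact F n)"
          using F_fact_Suc[of F n] Fd by (simp add: algebra_simps)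
        ultimately show ?thesis by (simp add: k_def)
      qed
    qed
  qed
qed

lemma T_lambda_cobweb:
  assumes "F \<in> T_lambda"
  shows "cobweb_tiling F"
proof -
  obtain lamK lamM where dec: "\<forall>k\<ge>1. \<forall>m\<ge>1. F (k + m) = lamK k m * F k + lamM k m * F m"
    using assms unfolding T_lambda_def by blast
  have dec': "\<And>k m. k \<ge> 1 \<Longrightarrow> m \<ge> 1 \<Longrightarrow> F (k + m) = lamK k m * F k + lamM k m * F m"
    using dec by blast
  have adm: "admissible F" by (rule adm_T[OF dec'])
  have til: "has_tiling F m n" if mn: "1 \<le> m" "m \<le> n" for m n
  proof -
    define g where "g = (\<lambda>s. s + (n - m))"
    define X where "X = (\<lambda>s. {1..F (n - m + s)})"
    have "g ` {1..m} = {1 + (n - m)..m + (n - m)}" unfolding g_def by (simp only: image_add_atLeastAtMost')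
    moreover have "{1 + (n - m)..m + (n - m)} = {n - m + 1..n}" using mn by auto
    moreover have "inj_on g {1..m}" unfolding g_def by (auto simp: inj_on_def)
    ultimately have bij: "bij_betw g {1..m} {n - m + 1..n}" by (simp add: bij_betw_def)
    have cnd: "\<forall>s\<in>{1..m}. finite (X s) \<and> card (X s) = F (g s)" by (simp add: X_def g_def add.commute)
    have "tiles (goodF F {1..m} X m) (PiE {1..m} X)"
      by (rule main_tiling[OF dec' mn(2) _ _ bij cnd]) auto
    then have "\<exists>T. (\<forall>B\<in>T. goodF F {1..m} X m B) \<and> pairwise disjnt T \<and> \<Union>T = PiE {1..m} X"
      unfolding tiles_def .
    then obtain T where T: "\<forall>B\<in>T. goodF F {1..m} X m B" "pairwise disjnt T" "\<Union>T = PiE {1..m} X"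
      by (elim exE conjE) (rule that)
    have "sub_box F m n B" if B: "B \<in> T" for B
    proof -
      have gB: "goodF F {1..m} X m B" using T(1) B by (rule bspec)
      then obtain \<sigma> A where sA: "bij_betw \<sigma> {1..m} {1..m}"
        "\<forall>s\<in>{1..m}. A s \<subseteq> X s \<and> card (A s) = F (\<sigma> s)" "B = PiE {1..m} A"
        unfolding goodF_def by (elim exE conjE) (rule that)
      define \<tau> where "\<tau> = (\<lambda>x. if x \<in> {1..m} then \<sigma> x else x)"
      have "bij_betw \<tau> {1..m} {1..m} = bij_betw \<sigma> {1..m} {1..m}"
        by (rule bij_betw_cong) (simp add: \<tau>_def)
      then have "bij_betw \<tau> {1..m} {1..m}" using sA(1) by simp
      then have perm: "\<tau> permutes {1..m}" by (rule bij_imp_permutes) (auto simp: \<tau>_def)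
      have "\<forall>s\<in>{1..m}. A s \<subseteq> {1..F (n - m + s)} \<and> card (A s) = F (\<tau> s)"
        using sA(2) by (simp add: \<tau>_def X_def)
      then show ?thesis unfolding sub_box_def using perm sA(3) by blast
    qed
    moreover have "F_box F m n = PiE {1..m} X" unfolding F_box_def X_def by simp
    ultimately show ?thesis unfolding has_tiling_def using T by auto
  qed
  show ?thesis unfolding cobweb_tiling_def using adm til by blast
qed

lemma T_ab_form:
  assumes "F \<in> T_lambda_ab"
  obtains \<alpha> \<beta> c where "nat_seq F" "c \<ge> 1" "\<And>n. n \<ge> 1 \<Longrightarrow> F n = c * hh \<alpha> \<beta> n"
proof -
  obtain \<alpha> \<beta> c where H: "nat_seq F" "c \<ge> 1" "\<forall>n\<ge>1. of_nat (F n) =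
           fps_nth (fps_const (of_nat c :: rat) * fps_X /
             ((1 - fps_const (of_nat \<alpha>) * fps_X) * (1 - fps_const (of_nat \<beta>) * fps_X))) n"
    using assms unfolding T_lambda_ab_def by blast
  have "F n = c * hh \<alpha> \<beta> n" if "n \<ge> 1" for n
  proof -
    have "(of_nat (F n) :: rat) = of_nat (c * hh \<alpha> \<beta> n)" using H(3)[rule_format, OF that] by (simp only: fps_coeff)
    then show ?thesis by (simp only: of_nat_eq_iff)
  qed
  then show ?thesis using that H by blast
qed

theorem corollary6:
  shows "(\<forall>F. F \<in> T_lambda_ab \<longrightarrow> F \<in> T_lambda)
       \<and> (\<forall>F. F \<in> T_lambda_ab \<longrightarrow> cobweb_tiling F)
       \<and> fib \<in> T_lambda \<and> fib \<notin> T_lambda_ab"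
proof -
  have P1: "F \<in> T_lambda" if Fin: "F \<in> T_lambda_ab" for F
  proof -
    obtain \<alpha> \<beta> c where H: "nat_seq F" "c \<ge> 1" "\<And>n. n \<ge> 1 \<Longrightarrow> F n = c * hh \<alpha> \<beta> n"
      using T_ab_form[OF Fin] by metis
    have "F (k + m) = \<alpha> ^ m * F k + \<beta> ^ k * F m" if "k \<ge> 1" "m \<ge> 1" for k m
      using H(3)[of k] H(3)[of m] H(3)[of "k + m"] that hh_add[of \<alpha> \<beta> k m]
      by (simp add: algebra_simps)
    then show ?thesis unfolding T_lambda_def using H(1)
      by (intro CollectI conjI exI[of _ "\<lambda>k m. \<alpha> ^ m"] exI[of _ "\<lambda>k m. \<beta> ^ k"]) auto
  qed
  have P3: "fib \<in> T_lambda"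
  proof -
    have ns: "nat_seq fib" unfolding nat_seq_def using fib_neq_0_nat by (auto simp: Suc_le_eq)
    have "fib (k + m) = fib (m - 1) * fib k + fib (Suc k) * fib m" if m1: "m \<ge> 1" for k m
    proof -
      obtain j where j: "m = Suc j" using m1 by (cases m) auto
      show ?thesis using fib_add[of j k] j by (simp add: algebra_simps)
    qed
    then show ?thesis unfolding T_lambda_def using ns
      by (intro CollectI conjI exI[of _ "\<lambda>k m. fib (m - 1)"] exI[of _ "\<lambda>k m. fib (Suc k)"]) auto
  qed
  have P4: "fib \<notin> T_lambda_ab"
  proof
    assume "fib \<in> T_lambda_ab"
    then obtain \<alpha> \<beta> c where H: "\<And>n. n \<ge> 1 \<Longrightarrow> fib n = c * hh \<alpha> \<beta> n"
      using T_ab_form by metis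
    have h1: "c = 1" using H[of 1] by simp
    have h2: "\<alpha> + \<beta> = 1" using H[of 2] h1 by (simp add: numeral_2_eq_2)
    have h3: "\<alpha> * \<alpha> + \<beta> * (\<alpha> + \<beta>) = 2" using H[of 3] h1 by (simp add: numeral_3_eq_3 numeral_2_eq_2)
    have "\<alpha> = 0 \<or> \<alpha> = 1" using h2 by auto
    then show False using h2 h3 by auto
  qed
  show ?thesis using P1 P3 P4 T_lambda_cobweb by blast
qed


end
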